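(* Fix $\alpha,s,t\in\mathbb{C}$. Let $k$ be a positive integer, $a,b\in\mathbb{Z}$ and $u\in\mathbb{C}$. For any integers $c_0=a,c_1,\dots,c_{k-1},c_k=b$ with $|c_{i+1}-c_i|=1$ for $i=0,\dots,k-1$, consider the vector $$\Pi_{1\ldots k}\,\psi^{(1)}(u+k-1)^{c_0}_{c_1}\otimes\psi^{(1)}(u+k-2)^{c_1}_{c_2}\otimes\cdots\otimes\psi^{(1)}(u+1)^{c_{k-2}}_{c_{k-1}}\otimes\psi^{(1)}(u)^{c_{k-1}}_{c_k}\in(\mathbb{C}^2)^{\otimes k}.$$ This vector does not depend on the choice of $c_1,\dots,c_{k-1}$ (subject to the stated constraint).
   Context: $\mathbb{C}^2$ has basis $e_1,e_2$; vectors are written as columns of coordinates. For integers $l$ and $u\in\mathbb{C}$ define $\psi^{(1)}(u)^l_{l+1}=\begin{pmatrix}1\\ \alpha(u-l-t)\end{pmatrix}$, $\psi^{(1)}(u)^l_{l-1}=\begin{pmatrix}1\\ \alpha(u+l+s)\end{pmatrix}$, and $\psi^{(1)}(u)^a_b=0$ if $|a-b|\neq1$. $\Pi_{1\ldots k}$ is the symmetrizer on $(\mathbb{C}^2)^{\otimes k}$: $\Pi_{1\ldots k}\,e_{i_1}\otimes\cdots\otimes e_{i_k}=\frac{1}{k!}\sum_{\sigma\in S_k}e_{i_{\sigma(1)}}\otimes\cdots\otimes e_{i_{\sigma(k)}}$. *)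

theory Defs
  imports Complex_Main "HOL-Combinatorics.Permutations"
begin

text \<open>Vectors in C^2 are pairs (x1, x2) of coordinates w.r.t. e_1, e_2.
  A tensor in (C^2)^{tensor k} is represented by its coordinate function on
  index lists of length k (False = e_1, True = e_2); value 0 off length k.\<close>

definition coord :: "complex \<times> complex \<Rightarrow> bool \<Rightarrow> complex" where
  "coord v i = (if i then snd v else fst v)"

definition psi1 :: "complex \<Rightarrow> complex \<Rightarrow> complex \<Rightarrow> complex \<Rightarrow> int \<Rightarrow> int \<Rightarrow> complex \<times> complex" where
  "psi1 \<alpha> s t u l m =
     (if m = l + 1 then (1, \<alpha> * (u - of_int l - t))
      else if m = l - 1 then (1, \<alpha> * (u + of_int l + s))
      else (0, 0))"

definition tensor_pure :: "(complex \<times> complex) list \<Rightarrow> bool list \<Rightarrow> complex" where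
  "tensor_pure vs is =
     (if length is = length vs then (\<Prod>j<length vs. coord (vs ! j) (is ! j)) else 0)"

definition symmetrizer :: "nat \<Rightarrow> (bool list \<Rightarrow> complex) \<Rightarrow> bool list \<Rightarrow> complex" where
  "symmetrizer k T is =
     (if length is = k then
        (1 / of_nat (fact k)) * (\<Sum>\<sigma>\<in>{\<sigma>. \<sigma> permutes {0..<k}}. T (map (\<lambda>j. is ! \<sigma> j) [0..<k]))
      else 0)"

definition fused_vector :: "complex \<Rightarrow> complex \<Rightarrow> complex \<Rightarrow> nat \<Rightarrow> complex \<Rightarrow> (nat \<Rightarrow> int) \<Rightarrow> bool list \<Rightarrow> complex" where
  "fused_vector \<alpha> s t k u c =
     symmetrizer k (tensor_pure (map (\<lambda>j. psi1 \<alpha> s t (u + of_nat (k - 1 - j)) (c j) (c (Suc j))) [0..<k]))"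

definition admissible_path :: "nat \<Rightarrow> int \<Rightarrow> int \<Rightarrow> (nat \<Rightarrow> int) \<Rightarrow> bool" where
  "admissible_path k a b c \<longleftrightarrow> c 0 = a \<and> c k = b \<and> (\<forall>i<k. \<bar>c (Suc i) - c i\<bar> = 1)"

end

theory Submission
  imports Defs
begin

lemma sym_perm:
  assumes p: "p permutes {..<k}" and len: "length vs = k"
  shows "symmetrizer k (tensor_pure (permute_list p vs)) = symmetrizer k (tensor_pure vs)"
proof
  fix "is" :: "bool list"
  show "symmetrizer k (tensor_pure (permute_list p vs)) is = symmetrizer k (tensor_pure vs) is"
  proof (cases "length is = k")
    case False thus ?thesis by (simp add: symmetrizer_def)
  next
    case True
    have S: "{0..<k} = {..<k}" by auto
    have ip: "inv p permutes {0..<k}" using p S by (simp add: permutes_inv)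
    have pk: "\<And>j. j < k \<Longrightarrow> p j < k" using p by (auto dest: permutes_in_image)
    have L: "(\<Sum>\<sigma>\<in>{\<sigma>. \<sigma> permutes {0..<k}}. tensor_pure (permute_list p vs) (map (\<lambda>j. is ! \<sigma> j) [0..<k]))
        = (\<Sum>\<sigma>\<in>{\<sigma>. \<sigma> permutes {0..<k}}. \<Prod>j<k. coord (vs ! p j) (is ! \<sigma> j))"
      by (rule sum.cong) (auto simp: tensor_pure_def permute_list_def len pk intro!: prod.cong)
    have R: "(\<Sum>\<sigma>\<in>{\<sigma>. \<sigma> permutes {0..<k}}. tensor_pure vs (map (\<lambda>j. is ! \<sigma> j) [0..<k]))
        = (\<Sum>\<sigma>\<in>{\<sigma>. \<sigma> permutes {0..<k}}. \<Prod>j<k. coord (vs ! j) (is ! \<sigma> j))"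
      by (rule sum.cong) (auto simp: tensor_pure_def len intro!: prod.cong)
    have R2: "(\<Sum>\<sigma>\<in>{\<sigma>. \<sigma> permutes {0..<k}}. \<Prod>j<k. coord (vs ! j) (is ! \<sigma> j))
       = (\<Sum>\<sigma>\<in>{\<sigma>. \<sigma> permutes {0..<k}}. \<Prod>j<k. coord (vs ! j) (is ! \<sigma> (inv p j)))"
      using sum_permutations_compose_right[OF ip, of "\<lambda>\<sigma>. \<Prod>j<k. coord (vs ! j) (is ! \<sigma> j)"]
      by simp
    have R3: "\<And>\<sigma>. (\<Prod>j<k. coord (vs ! j) (is ! \<sigma> (inv p j))) = (\<Prod>j<k. coord (vs ! p j) (is ! \<sigma> j))"
    proof -
      fix \<sigma> :: "nat \<Rightarrow> nat"
      have "(\<Prod>j<k. coord (vs ! j) (is ! \<sigma> (inv p j))) = prod ((\<lambda>j. coord (vs ! j) (is ! \<sigma> (inv p j))) \<circ> p) {..<k}"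
        using prod.permute[OF p] by metis
      also have "\<dots> = (\<Prod>j<k. coord (vs ! p j) (is ! \<sigma> j))"
        using permutes_inverses(2)[OF p] by simp
      finally show "?thesis \<sigma>" .
    qed
    show ?thesis using True L R R2 R3 by (simp add: symmetrizer_def)
  qed
qed

lemma path_mset:
  fixes \<alpha> s t u :: complex and k :: nat and c :: "nat \<Rightarrow> int"
  assumes steps: "\<forall>i<k. \<bar>c (Suc i) - c i\<bar> = 1"
  shows "n \<le> k \<Longrightarrow> \<exists>U D. U + D = n \<and> int U - int D = c n - c 0 \<and>
     mset (map (\<lambda>j. psi1 \<alpha> s t (u + of_nat (k - 1 - j)) (c j) (c (Suc j))) [0..<n])
     = mset (map (\<lambda>i. (1, \<alpha> * (u + of_nat (k - 1) - t - of_int (c 0) - 2 * of_nat i))) [0..<U])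
     + mset (map (\<lambda>i. (1, \<alpha> * (u + of_nat (k - 1) + s + of_int (c 0) - 2 * of_nat i))) [0..<D])"
proof (induction n)
  case 0 show ?case by auto
next
  case (Suc n)
  then obtain U D where UD: "U + D = n" "int U - int D = c n - c 0"
    and M: "mset (map (\<lambda>j. psi1 \<alpha> s t (u + of_nat (k - 1 - j)) (c j) (c (Suc j))) [0..<n])
     = mset (map (\<lambda>i. (1, \<alpha> * (u + of_nat (k - 1) - t - of_int (c 0) - 2 * of_nat i))) [0..<U])
     + mset (map (\<lambda>i. (1, \<alpha> * (u + of_nat (k - 1) + s + of_int (c 0) - 2 * of_nat i))) [0..<D])"
    by auto
  have nk: "n < k" using Suc.prems by simp
  have kn: "(of_nat (k - 1 - n) :: complex) = of_nat (k - 1) - of_nat n"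
    using nk by (simp add: of_nat_diff)
  have kn2: "(of_nat (k - Suc n) :: complex) = of_nat k - 1 - of_nat n"
    using nk by (simp add: of_nat_diff)
  have k1: "(of_nat (k - Suc 0) :: complex) = of_nat k - 1"
    using nk by (simp add: of_nat_diff)
  have cn: "(of_int (c n) :: complex) = of_int (c 0) + of_nat U - of_nat D"
  proof -
    have "c n = c 0 + int U - int D" using UD by simp
    hence "(of_int (c n) :: complex) = of_int (c 0 + int U - int D)" by simp
    thus ?thesis by simp
  qed
  have nUD: "(of_nat n :: complex) = of_nat U + of_nat D" using UD by (metis of_nat_add)
  from steps nk have "c (Suc n) = c n + 1 \<or> c (Suc n) = c n - 1" by fastforce
  thus ?case
  proof
    assume up: "c (Suc n) = c n + 1"
    have v: "psi1 \<alpha> s t (u + of_nat (k - 1 - n)) (c n) (c (Suc n))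
        = (1, \<alpha> * (u + of_nat (k - 1) - t - of_int (c 0) - 2 * of_nat U))"
      using up by (simp add: psi1_def kn kn2 k1 cn nUD algebra_simps)
    show ?case
      apply (rule exI[of _ "Suc U"], rule exI[of _ D])
      using UD up M v by (simp add: algebra_simps)
  next
    assume dn: "c (Suc n) = c n - 1"
    have v: "psi1 \<alpha> s t (u + of_nat (k - 1 - n)) (c n) (c (Suc n))
        = (1, \<alpha> * (u + of_nat (k - 1) + s + of_int (c 0) - 2 * of_nat D))"
      using dn by (simp add: psi1_def kn kn2 k1 cn nUD algebra_simps)
    show ?case
      apply (rule exI[of _ U], rule exI[of _ "Suc D"])
      using UD dn M v by (simp add: algebra_simps)
  qed
qed

theorem proposition4:
  fixes \<alpha> s t u :: complex and k :: nat and a b :: int and c c' :: "nat \<Rightarrow> int"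
  assumes "k > 0"
    and "admissible_path k a b c"
    and "admissible_path k a b c'"
  shows "fused_vector \<alpha> s t k u c = fused_vector \<alpha> s t k u c'"
proof -
  let ?vs = "map (\<lambda>j. psi1 \<alpha> s t (u + of_nat (k - 1 - j)) (c j) (c (Suc j))) [0..<k]"
  let ?ws = "map (\<lambda>j. psi1 \<alpha> s t (u + of_nat (k - 1 - j)) (c' j) (c' (Suc j))) [0..<k]"
  obtain U D where A: "U + D = k" "int U - int D = c k - c 0"
    "mset ?vs = mset (map (\<lambda>i. (1, \<alpha> * (u + of_nat (k - 1) - t - of_int (c 0) - 2 * of_nat i))) [0..<U])
     + mset (map (\<lambda>i. (1, \<alpha> * (u + of_nat (k - 1) + s + of_int (c 0) - 2 * of_nat i))) [0..<D])"
    using path_mset[of k c "k" \<alpha> s t u] assms(2) unfolding admissible_path_def by blast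
  obtain U' D' where B: "U' + D' = k" "int U' - int D' = c' k - c' 0"
    "mset ?ws = mset (map (\<lambda>i. (1, \<alpha> * (u + of_nat (k - 1) - t - of_int (c' 0) - 2 * of_nat i))) [0..<U'])
     + mset (map (\<lambda>i. (1, \<alpha> * (u + of_nat (k - 1) + s + of_int (c' 0) - 2 * of_nat i))) [0..<D'])"
    using path_mset[of k c' "k" \<alpha> s t u] assms(3) unfolding admissible_path_def by blast
  have e: "c 0 = a" "c k = b" "c' 0 = a" "c' k = b" using assms(2,3) by (auto simp: admissible_path_def)
  have "U = U'" "D = D'" using A(1,2) B(1,2) e by linarith+
  hence ms: "mset ?vs = mset ?ws" using A(3) B(3) e by simp
  obtain p where p: "p permutes {..<length ?ws}" "permute_list p ?ws = ?vs"
    using mset_eq_permutation[OF ms] by blast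
  have "symmetrizer k (tensor_pure ?vs) = symmetrizer k (tensor_pure ?ws)"
    using sym_perm[of p k ?ws] p by simp
  thus ?thesis by (simp add: fused_vector_def)
qed

end
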